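(* Let $\{\omega_n\}_{n\ge0}$ be a sequence of real numbers whose projection $\{\omega_n \bmod 1\}_{n\ge0}$ to $\mathbb{T}$ has the repetition property, and suppose there exist an integer $k\ge1$ and integers $a_1,\ldots,a_k$ with $|a_k|=1$ such that $$\omega_n + a_1\omega_{n-1}+a_2\omega_{n-2}+\cdots+a_k\omega_{n-k}=0 \quad\text{for all } n\ge k.$$ Then for every $r\in\mathbb{Q}$, the projection $\{r\omega_n \bmod 1\}_{n\ge0}$ to $\mathbb{T}$ has the repetition property, and it has the joint repetition property with $\{\omega_n \bmod 1\}_{n\ge0}$.
   Context: $\mathbb{T}=\mathbb{R}/\mathbb{Z}$ with metric $\mathrm{dist}(x,y)=\langle x-y\rangle$, where $\langle\tau\rangle=\min\{|\hat\tau-p|:p\in\mathbb{Z}\}$ for any representative $\hat\tau\in\mathbb{R}$ of $\tau$. $\mathbb{Z}_+=\{1,2,\ldots\}$. A sequence $\{\omega_n\}_{n\ge0}$ in a metric space $\Omega$ has the repetition property if for every $\varepsilon>0$ and $r \in \mathbb{Z}_+$ there exists $q \in \mathbb{Z}_+$ such that $\mathrm{dist}(\omega_n,\omega_{n+q}) < \varepsilon$ for $n = 0,1,\ldots, rq$. A family of sequences has the joint repetition property if each of them has the repetition property and, for each finite subfamily and each $\varepsilon>0$, $r\in\mathbb{Z}_+$, a single $q\in\mathbb{Z}_+$ can be chosen that works simultaneously for all sequences in the subfamily. *)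

theory Defs
  imports "HOL-Analysis.Analysis"
begin

definition tdist :: "real \<Rightarrow> real \<Rightarrow> real" where
  "tdist x y = (INF p\<in>(\<int>::real set). \<bar>x - y - p\<bar>)"

definition repetitive_T :: "(nat \<Rightarrow> real) \<Rightarrow> bool" where
  "repetitive_T w \<longleftrightarrow>
     (\<forall>\<epsilon>>0. \<forall>r::nat. r \<ge> 1 \<longrightarrow>
        (\<exists>q::nat. q \<ge> 1 \<and> (\<forall>n\<le>r * q. tdist (w n) (w (n + q)) < \<epsilon>)))"

definition joint_repetitive_T :: "(nat \<Rightarrow> real) set \<Rightarrow> bool" where
  "joint_repetitive_T F \<longleftrightarrow>
     (\<forall>w\<in>F. repetitive_T w) \<and>
     (\<forall>G. G \<subseteq> F \<longrightarrow> finite G \<longrightarrow>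
        (\<forall>\<epsilon>>0. \<forall>r::nat. r \<ge> 1 \<longrightarrow>
          (\<exists>q::nat. q \<ge> 1 \<and> (\<forall>w\<in>G. \<forall>n\<le>r * q. tdist (w n) (w (n + q)) < \<epsilon>))))"

end

theory Submission
  imports Defs
begin



lemma sum_split_add: "(\<Sum>t<a+b. f t) = (\<Sum>t<a. f t) + (\<Sum>s<b. f (a+s))"
  for f :: "nat \<Rightarrow> 'a::comm_monoid_add"
  by (induction b) (simp_all add: add.assoc)

lemma pigeon:
  fixes x :: "nat \<Rightarrow> int" and m k :: nat
  assumes m: "m \<ge> 1"
  obtains j1 j2 where "j1 < j2" "j2 \<le> m^k"
    "\<And>i. i < k \<Longrightarrow> x (j1+i) mod int m = x (j2+i) mod int m"
proof -
  define st where "st n = map (\<lambda>i. x (n+i) mod int m) [0..<k]" for n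
  define L where "L = {xs. set xs \<subseteq> {0..<int m} \<and> length xs = k}"
  have cL: "card L = m^k" unfolding L_def by (simp add: card_lists_length_eq)
  have fL: "finite L" unfolding L_def by (simp add: finite_lists_length_eq)
  have sub: "st ` {0..m^k} \<subseteq> L" using m unfolding L_def st_def by auto
  have "\<not> inj_on st {0..m^k}"
  proof
    assume "inj_on st {0..m^k}"
    from card_inj_on_le[OF this sub fL] cL show False by simp
  qed
  then obtain a b where ab: "a \<in> {0..m^k}" "b \<in> {0..m^k}" "a \<noteq> b" "st a = st b"
    unfolding inj_on_def by blast
  show ?thesis
  proof (cases "a < b")
    case True
    show ?thesis
    proof (rule that[of a b])
      fix i assume "i < k"
      then show "x (a+i) mod int m = x (b+i) mod int m"
        using arg_cong[OF ab(4), of "\<lambda>l. l ! i"] unfolding st_def by simp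
    qed (use True ab in auto)
  next
    case False
    show ?thesis
    proof (rule that[of b a])
      fix i assume "i < k"
      then show "x (b+i) mod int m = x (a+i) mod int m"
        using arg_cong[OF ab(4), of "\<lambda>l. l ! i"] unfolding st_def by simp
    qed (use False ab in auto)
  qed
qed

lemma sum_split_last:
  fixes f :: "nat \<Rightarrow> 'a::comm_monoid_add" and k :: nat
  assumes "k \<ge> 1"
  shows "(\<Sum>i=1..k. f i) = (\<Sum>i=1..k-1. f i) + (f k :: 'a::comm_monoid_add)"
proof -
  obtain j where j: "k = Suc j" using assms by (cases k) auto
  show ?thesis unfolding j by (simp add: sum.cl_ivl_Suc)
qed

lemma period_base:
  fixes x :: "nat \<Rightarrow> int" and m k R :: nat and a :: "nat \<Rightarrow> int"
  assumes m: "m \<ge> 1" and k: "k \<ge> 1" and ak: "\<bar>a k\<bar> = 1"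
    and recx: "\<And>n. k \<le> n \<Longrightarrow> n \<le> R \<Longrightarrow> x n + (\<Sum>i=1..k. a i * x (n-i)) = 0"
    and R: "m^k + k \<le> R"
  obtains P where "P \<ge> 1" "P \<le> m^k" "\<And>n. n + P \<le> R \<Longrightarrow> int m dvd (x (n+P) - x n)"
proof -
  obtain j1 j2 where j: "j1 < j2" "j2 \<le> m^k"
    "\<And>i. i < k \<Longrightarrow> x (j1+i) mod int m = x (j2+i) mod int m"
    using pigeon[OF m] by blast
  define P where "P = j2 - j1"
  have P1: "P \<ge> 1" and PM: "P \<le> m^k" using j unfolding P_def by auto
  have fw: "n + P \<le> R \<longrightarrow> int m dvd (x (n+P) - x n)" if "n \<ge> j1" for n
    using that
  proof (induction n rule: less_induct)
    case (less n)
    show ?case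
    proof (cases "n < j1 + k")
      case True
      then obtain i where i: "i < k" "n = j1 + i" using less.prems
        by (metis add_less_cancel_left le_add_diff_inverse)
      have "n + P = j2 + i" using i j(1) unfolding P_def by simp
      moreover have "int m dvd (x (j1+i) - x (j2+i))" using j(3)[OF i(1)] by (simp add: mod_eq_dvd_iff)
      ultimately show ?thesis using i \<open>n + P = j2 + i\<close> by (metis dvd_diff_commute)
    next
      case False
      show ?thesis
      proof
        assume nP: "n + P \<le> R"
        have e1: "x n = - (\<Sum>i=1..k. a i * x (n-i))" using recx[of n] False nP by simp
        have e2: "x (n+P) = - (\<Sum>i=1..k. a i * x (n+P-i))" using recx[of "n+P"] False nP by simp
        have "x (n+P) - x n = - (\<Sum>i=1..k. a i * (x (n-i+P) - x (n-i)))"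
        proof -
          have "(\<Sum>i=1..k. a i * x (n+P-i)) = (\<Sum>i=1..k. a i * x (n-i+P))"
            by (rule sum.cong) (use False in auto)
          then show ?thesis unfolding e1 e2
            by (simp add: sum_subtractf right_diff_distrib)
        qed
        moreover have "int m dvd (\<Sum>i=1..k. a i * (x (n-i+P) - x (n-i)))"
        proof (rule dvd_sum)
          fix i assume "i \<in> {1..k}"
          then have "n - i < n" "n - i \<ge> j1" "n - i + P \<le> R" using False nP by auto
          then show "int m dvd a i * (x (n-i+P) - x (n-i))" using less.IH by simp
        qed
        ultimately show "int m dvd (x (n+P) - x n)" by simp
      qed
    qed
  qed
  define Q where "Q n = (\<forall>n'. n \<le> n' \<longrightarrow> n' + P \<le> R \<longrightarrow> int m dvd (x (n'+P) - x n'))" for n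
  have Qj: "Q j1" unfolding Q_def using fw by auto
  have "Q 0"
  proof (rule inc_induct[of 0 j1])
    show "0 \<le> j1" by simp
    show "Q j1" by fact
  next
    fix n assume stepH: "0 \<le> n" "n < j1" and IH: "Q (Suc n)"
    show "Q n" unfolding Q_def
    proof (intro allI impI)
      fix n' assume nn: "n \<le> n'" "n' + P \<le> R"
      show "int m dvd (x (n'+P) - x n')"
      proof (cases "n' = n")
        case False then show ?thesis using IH nn unfolding Q_def by auto
      next
        case True
        have nk: "n + k + P \<le> R" using stepH j unfolding P_def using R by linarith
        have eq: "\<And>y. k \<le> y \<Longrightarrow> y \<le> R \<Longrightarrow>
           a k * x (y - k) = - x y - (\<Sum>i=1..k-1. a i * x (y-i))"
        proof -
          fix y assume y: "k \<le> y" "y \<le> R"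
          have "x y + ((\<Sum>i=1..k-1. a i * x (y-i)) + a k * x (y-k)) = 0"
            using recx[OF y] sum_split_last[OF k, of "\<lambda>i. a i * x (y-i)"] by simp
          then show "a k * x (y - k) = - x y - (\<Sum>i=1..k-1. a i * x (y-i))" by linarith
        qed
        have e1: "a k * x n = - x (n+k) - (\<Sum>i=1..k-1. a i * x (n+k-i))"
          using eq[of "n+k"] nk by simp
        have e2: "a k * x (n+P) = - x (n+k+P) - (\<Sum>i=1..k-1. a i * x (n+k+P-i))"
          using eq[of "n+k+P"] nk by (simp add: add.commute add.left_commute)
        have "a k * (x (n+P) - x n) = - (x (n+k+P) - x (n+k))
               - (\<Sum>i=1..k-1. a i * (x (n+k-i+P) - x (n+k-i)))"
        proof -
          have "(\<Sum>i=1..k-1. a i * x (n+k+P-i)) = (\<Sum>i=1..k-1. a i * x (n+k-i+P))"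
            by (rule sum.cong) auto
          then show ?thesis using e1 e2
            by (simp add: sum_subtractf right_diff_distrib)
        qed
        moreover have "int m dvd (x (n+k+P) - x (n+k))"
        proof -
          have "Suc n \<le> n + k" "n + k + P \<le> R" using nk k by auto
          then show ?thesis using IH unfolding Q_def by blast
        qed
        moreover have "int m dvd (\<Sum>i=1..k-1. a i * (x (n+k-i+P) - x (n+k-i)))"
        proof (rule dvd_sum)
          fix i assume "i \<in> {1..k-1}"
          then have "Suc n \<le> n+k-i" "n+k-i+P \<le> R" using nk by auto
          then have "int m dvd (x (n+k-i+P) - x (n+k-i))" using IH
            unfolding Q_def by blast
          then show "int m dvd a i * (x (n+k-i+P) - x (n+k-i))" by (rule dvd_mult)
        qed
        ultimately have "int m dvd a k * (x (n+P) - x n)"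
        proof -
          assume e: "a k * (x (n+P) - x n) = - (x (n+k+P) - x (n+k))
               - (\<Sum>i=1..k-1. a i * (x (n+k-i+P) - x (n+k-i)))"
            and d1: "int m dvd (x (n+k+P) - x (n+k))"
            and d2: "int m dvd (\<Sum>i=1..k-1. a i * (x (n+k-i+P) - x (n+k-i)))"
          have "int m dvd (- (x (n+k+P) - x (n+k))
               - (\<Sum>i=1..k-1. a i * (x (n+k-i+P) - x (n+k-i))))"
            by (rule dvd_diff) (use d1 d2 dvd_minus_iff in blast)+
          then show ?thesis unfolding e .
        qed
        moreover have "a k = 1 \<or> a k = -1" using ak by linarith
        ultimately show ?thesis using True by (auto simp: dvd_diff_commute)
      qed
    qed
  qed
  then show ?thesis using that[OF P1 PM] unfolding Q_def by auto
qed


lemma period: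
  fixes x :: "nat \<Rightarrow> int" and m k R :: nat and a :: "nat \<Rightarrow> int"
  assumes m: "m \<ge> 1" and k: "k \<ge> 1" and ak: "\<bar>a k\<bar> = 1"
    and recx: "\<And>n. k \<le> n \<Longrightarrow> n \<le> R \<Longrightarrow> x n + (\<Sum>i=1..k. a i * x (n-i)) = 0"
    and R: "m^k + k \<le> R"
    and nc: "n + c * fact (m^k) \<le> R"
  shows "int m dvd (x (n + c * fact (m^k)) - x n)"
proof -
  obtain P where P: "P \<ge> 1" "P \<le> m^k" "\<And>n. n + P \<le> R \<Longrightarrow> int m dvd (x (n+P) - x n)"
    using period_base[OF m k ak recx R] by blast
  have mult: "nn + cc * P \<le> R \<longrightarrow> int m dvd (x (nn + cc*P) - x nn)" for cc nn
  proof (induction cc)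
    case 0 then show ?case by simp
  next
    case (Suc cc)
    show ?case
    proof
      assume h: "nn + Suc cc * P \<le> R"
      then have "int m dvd (x (nn + cc*P + P) - x (nn + cc*P))" using P(3)[of "nn + cc*P"] by (simp add: add.assoc)
      moreover have "int m dvd (x (nn + cc*P) - x nn)" using Suc h by simp
      ultimately have "int m dvd ((x (nn + cc*P + P) - x (nn + cc*P)) + (x (nn + cc*P) - x nn))"
        by (rule dvd_add)
      then have "int m dvd (x (nn + cc*P + P) - x nn)" by simp
      moreover have "nn + Suc cc*P = nn + cc*P + P" by simp
      ultimately show "int m dvd (x (nn + Suc cc*P) - x nn)" by metis
    qed
  qed
  have "P dvd fact (m^k)" using P by (simp add: dvd_fact)
  then obtain d where d: "fact (m^k) = P * d" by blast
  have e: "n + c * fact (m^k) = n + (c*d) * P" using d by simp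
  show ?thesis using mult[of n "c*d"] nc unfolding e by blast
qed

lemma block:
  fixes f :: "nat \<Rightarrow> int" and m P :: nat
  assumes per: "\<And>u s. u < m \<Longrightarrow> s < P \<Longrightarrow> int m dvd (f (P*u + s) - f s)"
  shows "int m dvd (\<Sum>t<P*m. f t)"
proof -
  have "u \<le> m \<longrightarrow> int m dvd ((\<Sum>t<P*u. f t) - int u * (\<Sum>s<P. f s))" for u
  proof (induction u)
    case 0 then show ?case by simp
  next
    case (Suc u)
    show ?case
    proof
      assume h: "Suc u \<le> m"
      have "(\<Sum>t<P*Suc u. f t) = (\<Sum>t<P*u. f t) + (\<Sum>s<P. f (P*u + s))"
        using sum_split_add[of f "P*u" P] by (simp add: add.commute)
      moreover have "int m dvd ((\<Sum>s<P. f (P*u + s)) - (\<Sum>s<P. f s))"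
        unfolding sum_subtractf[symmetric] by (rule dvd_sum) (use per h in auto)
      moreover have "int m dvd ((\<Sum>t<P*u. f t) - int u * (\<Sum>s<P. f s))" using Suc h by simp
      ultimately show "int m dvd ((\<Sum>t<P*Suc u. f t) - int (Suc u) * (\<Sum>s<P. f s))"
      proof -
        assume e: "(\<Sum>t<P*Suc u. f t) = (\<Sum>t<P*u. f t) + (\<Sum>s<P. f (P*u + s))"
          and d1: "int m dvd ((\<Sum>s<P. f (P*u + s)) - (\<Sum>s<P. f s))"
          and d2: "int m dvd ((\<Sum>t<P*u. f t) - int u * (\<Sum>s<P. f s))"
        have "int m dvd (((\<Sum>t<P*u. f t) - int u * (\<Sum>s<P. f s)) + ((\<Sum>s<P. f (P*u + s)) - (\<Sum>s<P. f s)))"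
          using d1 d2 by (rule dvd_add[rotated])
        moreover have "((\<Sum>t<P*u. f t) - int u * (\<Sum>s<P. f s)) + ((\<Sum>s<P. f (P*u + s)) - (\<Sum>s<P. f s))
           = (\<Sum>t<P*Suc u. f t) - int (Suc u) * (\<Sum>s<P. f s)"
          unfolding e by (simp add: algebra_simps)
        ultimately show ?thesis by simp
      qed
    qed
  qed
  from this[of m] have "int m dvd ((\<Sum>t<P*m. f t) - int m * (\<Sum>s<P. f s))" by simp
  then have "int m dvd (((\<Sum>t<P*m. f t) - int m * (\<Sum>s<P. f s)) + int m * (\<Sum>s<P. f s))"
    by (rule dvd_add) simp
  then show ?thesis by simp
qed


lemma tdist_le: "z \<in> \<int> \<Longrightarrow> tdist x y \<le> \<bar>x - y - z\<bar>"
  unfolding tdist_def by (rule cINF_lower) (auto intro: bdd_belowI[of _ 0])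

lemma tdist_lt:
  assumes "tdist x y < d" shows "\<exists>z::int. \<bar>x - y - of_int z\<bar> < d"
proof -
  have ne: "(\<int>::real set) \<noteq> {}" using Ints_0 by blast
  have bd: "bdd_below ((\<lambda>p. \<bar>x - y - p\<bar>) ` (\<int>::real set))"
    by (rule bdd_belowI[of _ 0]) auto
  have "\<exists>p\<in>(\<int>::real set). \<bar>x - y - p\<bar> < d"
    using assms unfolding tdist_def cINF_less_iff[OF ne bd] .
  then show ?thesis by (auto elim!: Ints_cases)
qed



lemma main:
  fixes \<omega> :: "nat \<Rightarrow> real" and k :: nat and a :: "nat \<Rightarrow> int" and m r' :: nat
  assumes rep: "repetitive_T \<omega>"
    and k: "k \<ge> 1"
    and ak: "\<bar>a k\<bar> = 1"
    and rec: "\<And>n. n \<ge> k \<Longrightarrow> \<omega> n + (\<Sum>i=1..k. of_int (a i) * \<omega> (n - i)) = 0"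
    and m: "m \<ge> 1" and eps: "\<epsilon> > 0" and r': "r' \<ge> 1"
  shows "\<exists>q'\<ge>1. \<forall>n \<le> r' * q'. \<exists>Z::int. int m dvd Z \<and> \<bar>\<omega> n - \<omega> (n+q') - of_int Z\<bar> < \<epsilon>"
proof -
  define C where "C = 1 + (\<Sum>i=1..k. \<bar>real_of_int (a i)\<bar>)"
  have C1: "C \<ge> 1" unfolding C_def by (simp add: sum_nonneg)
  define M where "M = m^k"
  define P where "P = (fact M :: nat)"
  define N where "N = P*m"
  have N1: "N \<ge> 1" unfolding N_def P_def using m by (simp add: Suc_le_eq)
  define \<delta> where "\<delta> = min (1/(2*C)) (\<epsilon> / N)"
  have d0: "\<delta> > 0" unfolding \<delta>_def using C1 eps N1 by simp
  have dC: "\<delta> * C \<le> 1/2"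
  proof -
    have "\<delta> \<le> 1/(2*C)" unfolding \<delta>_def by simp
    then have "\<delta> * C \<le> 1/(2*C) * C" using C1 by (intro mult_right_mono) auto
    also have "\<dots> = 1/2" using C1 by simp
    finally show ?thesis .
  qed
  have dN: "real N * \<delta> \<le> \<epsilon>"
  proof -
    have "\<delta> \<le> \<epsilon> / N" unfolding \<delta>_def by simp
    then have "real N * \<delta> \<le> real N * (\<epsilon> / N)" using N1 by (intro mult_left_mono) auto
    also have "\<dots> = \<epsilon>" using N1 by simp
    finally show ?thesis .
  qed
  define R where "R = r'*N + N + M + k"
  have R1: "R \<ge> 1" unfolding R_def using k by simp
  obtain q where q1: "q \<ge> 1" and q: "\<And>n. n \<le> R*q \<Longrightarrow> tdist (\<omega> n) (\<omega> (n+q)) < \<delta>"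
    using rep d0 R1 unfolding repetitive_T_def by blast
  define d where "d n = \<omega> n - \<omega> (n+q)" for n
  have "\<forall>n. \<exists>z::int. n \<le> R*q \<longrightarrow> \<bar>d n - of_int z\<bar> < \<delta>"
    using q tdist_lt unfolding d_def by blast
  from choice[OF this] obtain z :: "nat \<Rightarrow> int" where z0: "\<forall>n. n \<le> R*q \<longrightarrow> \<bar>d n - of_int (z n)\<bar> < \<delta>"
    by blast
  then have z: "\<And>n. n \<le> R*q \<Longrightarrow> \<bar>d n - of_int (z n)\<bar> < \<delta>" by blast
  define e where "e j = d j - of_int (z j)" for j
  have recz: "z n + (\<Sum>i=1..k. a i * z (n-i)) = 0" if nk: "k \<le> n" "n \<le> R*q" for n
  proof -
    have s: "(\<Sum>i=1..k. of_int (a i) * \<omega> (n+q-i)) = (\<Sum>i=1..k. of_int (a i) * \<omega> (n-i+q))"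
      by (rule sum.cong) (use nk in auto)
    have drec: "d n + (\<Sum>i=1..k. of_int (a i) * d (n-i)) = 0"
    proof -
      have "d n + (\<Sum>i=1..k. of_int (a i) * d (n-i))
          = (\<omega> n + (\<Sum>i=1..k. of_int (a i) * \<omega> (n - i)))
            - (\<omega> (n+q) + (\<Sum>i=1..k. of_int (a i) * \<omega> (n+q-i)))"
        unfolding s d_def by (simp add: sum_subtractf right_diff_distrib)
      then show ?thesis using rec[of n] rec[of "n+q"] nk by simp
    qed
    have ez: "real_of_int (z n + (\<Sum>i=1..k. a i * z (n-i))) = - (e n + (\<Sum>i=1..k. of_int (a i) * e (n-i)))"
    proof -
      have "e n + (\<Sum>i=1..k. of_int (a i) * e (n-i)) = (d n + (\<Sum>i=1..k. of_int (a i) * d (n-i)))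
           - (of_int (z n) + (\<Sum>i=1..k. of_int (a i) * of_int (z (n-i))))"
        unfolding e_def by (simp add: sum_subtractf right_diff_distrib)
      then show ?thesis using drec by simp
    qed
    have eb: "\<bar>e j\<bar> \<le> \<delta>" if "j \<le> R*q" for j using z[OF that] unfolding e_def by simp
    have "\<bar>e n + (\<Sum>i=1..k. of_int (a i) * e (n-i))\<bar> \<le> \<bar>e n\<bar> + (\<Sum>i=1..k. \<bar>of_int (a i) * e (n-i)\<bar>)"
      using abs_triangle_ineq[of "e n" "\<Sum>i=1..k. of_int (a i) * e (n-i)"]
        sum_abs[of "\<lambda>i. of_int (a i) * e (n-i)" "{1..k}"] by linarith
    also have "\<dots> \<le> \<delta> + (\<Sum>i=1..k. \<bar>real_of_int (a i)\<bar> * \<delta>)"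
    proof (intro add_mono sum_mono)
      show "\<bar>e n\<bar> \<le> \<delta>" using eb nk by simp
      fix i assume "i \<in> {1..k}"
      then have "\<bar>e (n-i)\<bar> \<le> \<delta>" using eb nk by simp
      then show "\<bar>of_int (a i) * e (n-i)\<bar> \<le> \<bar>real_of_int (a i)\<bar> * \<delta>"
        by (simp add: abs_mult mult_left_mono)
    qed
    also have "\<dots> = \<delta> * C"
    proof -
      have "(\<Sum>i=1..k. \<bar>real_of_int (a i)\<bar> * \<delta>) = (\<Sum>i=1..k. \<bar>real_of_int (a i)\<bar>) * \<delta>"
        by (rule sum_distrib_right[symmetric])
      then show ?thesis unfolding C_def by (simp add: algebra_simps)
    qed
    finally have "\<bar>real_of_int (z n + (\<Sum>i=1..k. a i * z (n-i)))\<bar> < 1" using ez dC by simp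
    then show ?thesis by linarith
  qed
  have "R \<le> R*q" using q1 by simp
  then have RM: "M + k \<le> R*q" unfolding R_def by linarith
  have per: "int m dvd (z (n + c*P) - z n)" if "n + c*P \<le> R*q" for n c
    using period[OF m k ak recz, of "R*q" n c] RM that unfolding M_def P_def by blast
  show ?thesis
  proof (intro exI[of _ "N*q"] conjI allI impI)
    show "N*q \<ge> 1" using N1 q1 by simp
    fix n assume n: "n \<le> r' * (N*q)"
    have nb: "n + N*q \<le> R*q"
    proof -
      have "n + N*q \<le> (r'*N + N) * q" using n by (simp add: algebra_simps)
      also have "\<dots> \<le> R * q" unfolding R_def by simp
      finally show ?thesis .
    qed
    define Z where "Z = (\<Sum>t<N. z (n + t*q))"
    have "int m dvd (\<Sum>t<P*m. z (n + t*q))"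
    proof (rule block)
      fix u s assume us: "u < m" "s < P"
      have "P*u + s < P*(u+1)" using us by simp
      moreover have "P*(u+1) \<le> P*m" using us by (intro mult_le_mono2) simp
      ultimately have "P*u + s < P*m" by linarith
      then have "(P*u + s) * q \<le> N * q" unfolding N_def by simp
      then have "n + s*q + (u*q)*P \<le> R*q" using nb by (simp add: algebra_simps)
      moreover have "n + (P*u+s)*q = n + s*q + (u*q)*P" by (simp add: algebra_simps)
      ultimately show "int m dvd (z (n + (P*u+s)*q) - z (n + s*q))" using per[of "n + s*q" "u*q"] by (simp add: add.assoc)
    qed
    then have mZ: "int m dvd Z" unfolding Z_def N_def .
    have tel: "\<omega> n - \<omega> (n + N*q) = (\<Sum>t<N. d (n + t*q))"
    proof -
      have "(\<Sum>t<N. \<omega> (n + t*q) - \<omega> (n + Suc t * q)) = \<omega> (n + 0*q) - \<omega> (n + N*q)"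
        by (rule sum_lessThan_telescope')
      moreover have "\<And>t. d (n + t*q) = \<omega> (n + t*q) - \<omega> (n + Suc t * q)"
        unfolding d_def by (simp add: algebra_simps)
      ultimately show ?thesis by simp
    qed
    have "\<bar>\<omega> n - \<omega> (n + N*q) - of_int Z\<bar> = \<bar>\<Sum>t<N. (d (n + t*q) - of_int (z (n + t*q)))\<bar>"
      unfolding tel Z_def by (simp add: sum_subtractf)
    also have "\<dots> \<le> (\<Sum>t<N. \<bar>d (n + t*q) - of_int (z (n + t*q))\<bar>)" by (rule sum_abs)
    also have "\<dots> < (\<Sum>t<N. \<delta>)"
    proof (rule sum_strict_mono)
      have "0 \<in> {..<N}" using N1 by simp
      then show "{..<N} \<noteq> {}" by blast
      fix t assume "t \<in> {..<N}"
      then have "t*q \<le> N*q" by simp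
      then have "n + t*q \<le> R*q" using nb by linarith
      then show "\<bar>d (n + t*q) - of_int (z (n + t*q))\<bar> < \<delta>" using z by blast
    qed simp
    also have "\<dots> = real N * \<delta>" by simp
    also have "\<dots> \<le> \<epsilon>" by (rule dN)
    finally show "\<exists>Z::int. int m dvd Z \<and> \<bar>\<omega> n - \<omega> (n + N*q) - of_int Z\<bar> < \<epsilon>"
      using mZ by blast
  qed
qed

theorem lemma3p3:
  fixes \<omega> :: "nat \<Rightarrow> real" and k :: nat and a :: "nat \<Rightarrow> int"
  assumes rep: "repetitive_T \<omega>"
    and k: "k \<ge> 1"
    and ak: "\<bar>a k\<bar> = 1"
    and rec: "\<And>n. n \<ge> k \<Longrightarrow> \<omega> n + (\<Sum>i=1..k. of_int (a i) * \<omega> (n - i)) = 0"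
  shows "\<forall>r\<in>(\<rat>::real set). repetitive_T (\<lambda>n. r * \<omega> n)
           \<and> joint_repetitive_T {\<omega>, (\<lambda>n. r * \<omega> n)}"
proof
  fix r :: real assume "r \<in> \<rat>"
  then obtain p b :: int where b: "b > 0" and r: "r = of_int p / of_int b"
    by (rule Rats_cases')
  define m where "m = nat b"
  have m: "m \<ge> 1" and bm: "b = int m" unfolding m_def using b by auto
  have key: "\<exists>q\<ge>1. \<forall>n \<le> r' * q. tdist (\<omega> n) (\<omega> (n+q)) < \<epsilon>
                 \<and> tdist (r * \<omega> n) (r * \<omega> (n+q)) < \<epsilon>"
    if eps: "\<epsilon> > 0" and r': "r' \<ge> 1" for \<epsilon> :: real and r' :: nat
  proof -
    define \<epsilon>' where "\<epsilon>' = \<epsilon> / (\<bar>r\<bar> + 1)"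
    have e'0: "\<epsilon>' > 0" unfolding \<epsilon>'_def using eps by (simp add: add_pos_nonneg)
    have e'e: "(\<bar>r\<bar> + 1) * \<epsilon>' = \<epsilon>" unfolding \<epsilon>'_def by (simp add: add_pos_nonneg)
    then have e'e2: "\<bar>r\<bar> * \<epsilon>' + \<epsilon>' = \<epsilon>" by (simp add: distrib_right)
    have rpos: "0 \<le> \<bar>r\<bar> * \<epsilon>'" using e'0 by simp
    obtain q where q1: "q \<ge> 1" and
      q: "\<forall>n \<le> r' * q. \<exists>Z::int. int m dvd Z \<and> \<bar>\<omega> n - \<omega> (n+q) - of_int Z\<bar> < \<epsilon>'"
      using main[OF rep k ak rec m e'0 r'] by blast
    show ?thesis
    proof (intro exI[of _ q] conjI allI impI)
      show "q \<ge> 1" by fact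
      fix n assume n: "n \<le> r' * q"
      obtain Z :: int where mZ: "int m dvd Z" and Z: "\<bar>\<omega> n - \<omega> (n+q) - of_int Z\<bar> < \<epsilon>'"
        using q n by blast
      obtain W where W: "Z = int m * W" using mZ by blast
      have "tdist (\<omega> n) (\<omega> (n+q)) \<le> \<bar>\<omega> n - \<omega> (n+q) - of_int Z\<bar>"
        by (rule tdist_le) simp
      also have "\<dots> < \<epsilon>'" by fact
      also have "\<epsilon>' \<le> \<epsilon>" using e'e2 rpos by linarith
      finally show "tdist (\<omega> n) (\<omega> (n+q)) < \<epsilon>" .
      have rZ: "r * of_int Z = of_int (p * W)" unfolding r W bm using m by simp
      have "tdist (r * \<omega> n) (r * \<omega> (n+q)) \<le> \<bar>r * \<omega> n - r * \<omega> (n+q) - of_int (p*W)\<bar>"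
        by (rule tdist_le) simp
      also have "\<dots> = \<bar>r\<bar> * \<bar>\<omega> n - \<omega> (n+q) - of_int Z\<bar>"
        unfolding rZ[symmetric] abs_mult[symmetric] by (simp add: algebra_simps)
      also have "\<dots> \<le> \<bar>r\<bar> * \<epsilon>'" using Z by (intro mult_left_mono) auto
      also have "\<dots> < \<epsilon>" using e'e2 e'0 by linarith
      finally show "tdist (r * \<omega> n) (r * \<omega> (n+q)) < \<epsilon>" .
    qed
  qed
  have repr: "repetitive_T (\<lambda>n. r * \<omega> n)"
    unfolding repetitive_T_def using key by blast
  have "joint_repetitive_T {\<omega>, (\<lambda>n. r * \<omega> n)}"
    unfolding joint_repetitive_T_def
  proof (intro conjI allI impI)
    show "\<forall>w\<in>{\<omega>, \<lambda>n. r * \<omega> n}. repetitive_T w" using rep repr by blast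
    fix G \<epsilon> and r' :: nat
    assume G: "G \<subseteq> {\<omega>, \<lambda>n. r * \<omega> n}" and "finite G" and eps: "(\<epsilon>::real) > 0" and r': "r' \<ge> 1"
    obtain q where "q \<ge> 1" and q: "\<forall>n \<le> r' * q. tdist (\<omega> n) (\<omega> (n+q)) < \<epsilon>
                 \<and> tdist (r * \<omega> n) (r * \<omega> (n+q)) < \<epsilon>" using key[OF eps r'] by blast
    show "\<exists>q\<ge>1. \<forall>w\<in>G. \<forall>n\<le>r' * q. tdist (w n) (w (n + q)) < \<epsilon>"
    proof (intro exI[of _ q] conjI ballI allI impI)
      show "q \<ge> 1" by fact
      fix w n assume "w \<in> G" "n \<le> r' * q"
      note wn = this
      have "w = \<omega> \<or> w = (\<lambda>n. r * \<omega> n)" using G wn(1) by blast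
      then show "tdist (w n) (w (n + q)) < \<epsilon>" using q wn(2) by (elim disjE) simp_all
    qed
  qed
  with repr show "repetitive_T (\<lambda>n. r * \<omega> n) \<and> joint_repetitive_T {\<omega>, (\<lambda>n. r * \<omega> n)}" by blast
qed

end
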